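(* Let $\mathcal C\subseteq\mathcal L_{n,q}$ be an $\mathbb F_{q^n}$-linear code of dimension $k$. Then $(\mathcal C^{[i]})^{\perp}=(\mathcal C^{\perp})^{[i]}$ for each $i\in\{0,\ldots,n-1\}$. Consequently $h(\mathcal C^\perp)=n-2k+h(\mathcal C)$.
   Context: $q$ is a prime power, $[i]:=q^i$. $\mathcal L_{n,q}$ is the $\mathbb F_{q^n}$-vector space of linearized polynomials $f(x)=\sum_{i=0}^{n-1}f_ix^{[i]}$, $f_i\in\mathbb F_{q^n}$. For $f(x)=\sum_i f_ix^{[i]}$, $f(x)^{[j]}:=x^{[j]}\circ f(x)=\sum_i f_i^{[j]}x^{[(i+j)\bmod n]}$, and $\mathcal C^{[j]}=\{f^{[j]}\colon f\in\mathcal C\}$. The Delsarte dual is $\mathcal C^\perp=\{f\in\mathcal L_{n,q}\colon b(f,g)=0\ \forall g\in\mathcal C\}$, where $b(f,g)=\mathrm{Tr}_{q^n/q}\big(\sum_{i=0}^{n-1}f_ig_i\big)$ and $\mathrm{Tr}_{q^n/q}(x)=x+x^{[1]}+\cdots+x^{[n-1]}$. For a code $\mathcal C$, $h(\mathcal C):=\max\{\dim(\mathcal C\cap\mathcal C^{[j]})\colon j=1,\ldots,n-1,\ \gcd(j,n)=1\}$. *)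

theory Defs
  imports Complex_Main "HOL-Computational_Algebra.Primes" "HOL-Library.Function_Algebras"
begin

(* Linearized polynomials f = sum_{i<n} f_i x^[i] over F_{q^n} are represented by their
   coefficient sequences f :: nat => 'a with f i = 0 for i >= n.  The field F_{q^n} is a
   finite field type 'a with CARD('a) = q^n. *)

definition Lnq :: "nat \<Rightarrow> (nat \<Rightarrow> 'a::zero) set" where
  "Lnq n = {f. \<forall>i\<ge>n. f i = 0}"

definition scal :: "'a::times \<Rightarrow> (nat \<Rightarrow> 'a) \<Rightarrow> (nat \<Rightarrow> 'a)" where
  "scal c f = (\<lambda>i. c * f i)"

definition trace :: "nat \<Rightarrow> nat \<Rightarrow> 'a::comm_ring_1 \<Rightarrow> 'a" where
  "trace q n x = (\<Sum>i<n. x ^ (q ^ i))"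

definition bform :: "nat \<Rightarrow> nat \<Rightarrow> (nat \<Rightarrow> 'a::comm_ring_1) \<Rightarrow> (nat \<Rightarrow> 'a) \<Rightarrow> 'a" where
  "bform q n f g = trace q n (\<Sum>i<n. f i * g i)"

definition ddual :: "nat \<Rightarrow> nat \<Rightarrow> (nat \<Rightarrow> 'a::comm_ring_1) set \<Rightarrow> (nat \<Rightarrow> 'a) set" where
  "ddual q n C = {f \<in> Lnq n. \<forall>g\<in>C. bform q n f g = 0}"

(* f^[j] = x^[j] o f = sum_i f_i^[j] x^[(i+j) mod n]; its coefficient at position m < n is
   f_{(m - j) mod n}^[j]. *)
definition fshift :: "nat \<Rightarrow> nat \<Rightarrow> nat \<Rightarrow> (nat \<Rightarrow> 'a::comm_ring_1) \<Rightarrow> (nat \<Rightarrow> 'a)" where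
  "fshift q n j f = (\<lambda>m. if m < n then (f ((m + (n - j mod n)) mod n)) ^ (q ^ j) else 0)"

definition cshift :: "nat \<Rightarrow> nat \<Rightarrow> nat \<Rightarrow> (nat \<Rightarrow> 'a::comm_ring_1) set \<Rightarrow> (nat \<Rightarrow> 'a) set" where
  "cshift q n j C = fshift q n j ` C"

definition cdim :: "(nat \<Rightarrow> 'a::field) set \<Rightarrow> nat" where
  "cdim C = Vector_Spaces.vector_space.dim scal C"

definition hval :: "nat \<Rightarrow> nat \<Rightarrow> (nat \<Rightarrow> 'a::field) set \<Rightarrow> nat" where
  "hval q n C = Max {cdim (C \<inter> cshift q n j C) | j. 1 \<le> j \<and> j \<le> n - 1 \<and> coprime j n}"

end

theory Submission
  imports Defs "HOL-Library.FuncSet" "HOL-Library.Cardinality" "HOL-Number_Theory.Residues" "HOL-Computational_Algebra.Polynomial"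
begin


interpretation vs: vector_space "scal :: 'a::field \<Rightarrow> (nat \<Rightarrow> 'a) \<Rightarrow> (nat \<Rightarrow> 'a)"
  by unfold_locales (auto simp: scal_def fun_eq_iff algebra_simps)


definition Vset :: "nat set \<Rightarrow> (nat \<Rightarrow> 'a::zero) set" where
  "Vset J = {f. \<forall>i. i \<notin> J \<longrightarrow> f i = 0}"

lemma Lnq_Vset: "Lnq n = Vset {..<n}"
  unfolding Lnq_def Vset_def by auto

lemma card_Vset:
  assumes "finite J"
  shows "card (Vset J :: (nat \<Rightarrow> 'a::{zero,finite}) set) = CARD('a) ^ card J"
proof -
  have "bij_betw (\<lambda>f. restrict f J) (Vset J :: (nat \<Rightarrow> 'a) set) (J \<rightarrow>\<^sub>E (UNIV :: 'a set))"
    by (rule bij_betw_byWitness[where f'="\<lambda>g i. if i \<in> J then g i else 0"])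
       (auto simp: Vset_def fun_eq_iff PiE_def extensional_def)
  then have "card (Vset J :: (nat \<Rightarrow> 'a) set) = card (J \<rightarrow>\<^sub>E (UNIV :: 'a set))"
    by (rule bij_betw_same_card)
  also have "\<dots> = CARD('a) ^ card J"
    using assms by (simp add: card_PiE)
  finally show ?thesis .
qed

lemma finite_Vset:
  assumes "finite J"
  shows "finite (Vset J :: (nat \<Rightarrow> 'a::{zero,finite}) set)"
proof -
  have "Vset J = (\<lambda>g i. if i \<in> J then g i else 0) ` (J \<rightarrow>\<^sub>E (UNIV :: 'a set))"
  proof safe
    fix f :: "nat \<Rightarrow> 'a" assume "f \<in> Vset J"
    then show "f \<in> (\<lambda>g i. if i \<in> J then g i else 0) ` (J \<rightarrow>\<^sub>E UNIV)"
      by (intro image_eqI[where x="restrict f J"]) (auto simp: Vset_def fun_eq_iff)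
  qed (auto simp: Vset_def)
  then show ?thesis using assms by (simp add: finite_PiE)
qed

lemma finite_Lnq: "finite (Lnq n :: (nat \<Rightarrow> 'a::{zero,finite}) set)"
  by (simp add: Lnq_Vset finite_Vset)

lemma card_Lnq: "card (Lnq n :: (nat \<Rightarrow> 'a::{zero,finite}) set) = CARD('a) ^ n"
  by (simp add: Lnq_Vset card_Vset)

lemma subspace_Vset: "vs.subspace (Vset J :: (nat \<Rightarrow> 'a::field) set)"
  unfolding vs.subspace_def Vset_def by (auto simp: scal_def)

lemma subspace_Lnq: "vs.subspace (Lnq n :: (nat \<Rightarrow> 'a::field) set)"
  by (simp add: Lnq_Vset subspace_Vset)

lemma card_span_indep:
  fixes B :: "(nat \<Rightarrow> 'a::{field,finite}) set"
  assumes fin: "finite B" and ind: "vs.independent B"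
  shows "card (vs.span B) = CARD('a) ^ card B"
proof -
  define F where "F = (\<lambda>u. \<Sum>v\<in>B. scal (u v) v)"
  have span: "vs.span B = F ` (B \<rightarrow>\<^sub>E (UNIV :: 'a set))"
  proof -
    have "vs.span B = range F" unfolding F_def by (rule vs.span_finite[OF fin])
    also have "\<dots> = F ` (B \<rightarrow>\<^sub>E UNIV)"
    proof safe
      fix u show "F u \<in> F ` (B \<rightarrow>\<^sub>E UNIV)"
        by (intro image_eqI[where x="restrict u B"]) (auto simp: F_def intro!: sum.cong)
    qed auto
    finally show ?thesis .
  qed
  have inj: "inj_on F (B \<rightarrow>\<^sub>E (UNIV :: 'a set))"
  proof (rule inj_onI)
    fix u w assume u: "u \<in> B \<rightarrow>\<^sub>E UNIV" and w: "w \<in> B \<rightarrow>\<^sub>E UNIV" and eq: "F u = F w"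
    have "(\<Sum>v\<in>B. scal (u v - w v) v) = (\<Sum>v\<in>B. scal (u v) v - scal (w v) v)"
      by (intro sum.cong) (auto simp: scal_def fun_eq_iff algebra_simps)
    also have "\<dots> = F u - F w" unfolding F_def by (rule sum_subtractf)
    also have "\<dots> = 0" using eq by simp
    finally have z: "(\<Sum>v\<in>B. scal (u v - w v) v) = 0" .
    have "\<forall>v\<in>B. u v - w v = 0"
    proof (rule ccontr)
      assume "\<not> (\<forall>v\<in>B. u v - w v = 0)"
      then have "vs.dependent B"
        unfolding vs.dependent_finite[OF fin] using z
        by (intro exI[where x="\<lambda>v. u v - w v"]) auto
      then show False using ind by simp
    qed
    then show "u = w" using u w by (auto simp: PiE_def extensional_def fun_eq_iff)
  qed
  have "card (vs.span B) = card (B \<rightarrow>\<^sub>E (UNIV :: 'a set))"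
    using span inj by (simp add: card_image)
  also have "\<dots> = CARD('a) ^ card B" using fin by (simp add: card_PiE)
  finally show ?thesis .
qed

lemma card_subspace:
  fixes S :: "(nat \<Rightarrow> 'a::{field,finite}) set"
  assumes sub: "vs.subspace S" and fin: "finite S"
  shows "card S = CARD('a) ^ vs.dim S"
proof -
  obtain B where B: "B \<subseteq> S" "vs.independent B" "S \<subseteq> vs.span B" "card B = vs.dim S"
    by (rule vs.basis_exists)
  have "vs.span B = S" using B sub by (intro vs.span_subspace) auto
  moreover have "finite B" using B fin finite_subset by blast
  ultimately show ?thesis using card_span_indep[of B] B by simp
qed

lemma card_ge2: "2 \<le> CARD('a::{field,finite})"
proof -
  have "{0, 1::'a} \<subseteq> UNIV" by simp
  then have "card {0, 1::'a} \<le> CARD('a)" by (intro card_mono) simp_all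
  then show ?thesis by simp
qed

lemma pow_inj: "CARD('a::{field,finite}) ^ a = CARD('a) ^ b \<Longrightarrow> a = b"
  using card_ge2[where 'a='a] by (simp add: power_inject_exp)




definition sumset :: "(nat \<Rightarrow> 'a::ab_group_add) set \<Rightarrow> (nat \<Rightarrow> 'a) set \<Rightarrow> (nat \<Rightarrow> 'a) set" where
  "sumset A B = {x + y | x y. x \<in> A \<and> y \<in> B}"

definition dotp :: "nat \<Rightarrow> (nat \<Rightarrow> 'a::comm_ring_1) \<Rightarrow> (nat \<Rightarrow> 'a) \<Rightarrow> 'a" where
  "dotp n f g = (\<Sum>i<n. f i * g i)"

definition sdual :: "nat \<Rightarrow> (nat \<Rightarrow> 'a::comm_ring_1) set \<Rightarrow> (nat \<Rightarrow> 'a) set" where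
  "sdual n S = {f \<in> Lnq n. \<forall>g\<in>S. dotp n f g = 0}"

lemma card_fibers:
  assumes fin: "finite G" and c: "\<And>y. y \<in> h ` G \<Longrightarrow> card {x\<in>G. h x = y} = c"
  shows "card G = card (h ` G) * c"
proof -
  have G: "G = (\<Union>y\<in>h`G. {x\<in>G. h x = y})" by auto
  have "card (\<Union>y\<in>h`G. {x\<in>G. h x = y}) = (\<Sum>y\<in>h`G. card {x\<in>G. h x = y})"
    using fin by (intro card_UN_disjoint) auto
  also have "\<dots> = (\<Sum>y\<in>h`G. c)" using c by (intro sum.cong) auto
  finally show ?thesis using G by simp
qed

lemma card_sumset:
  fixes A B :: "(nat \<Rightarrow> 'a::field) set"
  assumes sA: "vs.subspace A" and sB: "vs.subspace B" and fA: "finite A" and fB: "finite B"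
  shows "card (sumset A B) * card (A \<inter> B) = card A * card B"
proof -
  define h where "h = (\<lambda>(a::nat\<Rightarrow>'a, b). a + b)"
  have img: "h ` (A \<times> B) = sumset A B" unfolding h_def sumset_def by auto
  have fib: "card {x\<in>A \<times> B. h x = y} = card (A \<inter> B)" if yin: "y \<in> h ` (A \<times> B)" for y
  proof -
    obtain x where x: "x \<in> A \<times> B" "y = h x" using yin by blast
    obtain a0 b0 where ab: "a0 \<in> A" "b0 \<in> B" "y = a0 + b0" using x unfolding h_def by (cases x) auto
    have "{x\<in>A \<times> B. h x = y} = (\<lambda>t. (a0 + t, b0 - t)) ` (A \<inter> B)"
    proof (intro Set.set_eqI iffI)
      fix x assume "x \<in> {x\<in>A \<times> B. h x = y}"
      then obtain a b where a: "a \<in> A" and b: "b \<in> B" and e: "h (a, b) = y" and xab: "x = (a, b)"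
        by (cases x) auto
      have "a - a0 \<in> A" using a ab sA by (simp add: vs.subspace_diff)
      moreover have "a - a0 = b0 - b" using e ab unfolding h_def by (simp add: algebra_simps)
      moreover have "b0 - b \<in> B" using b ab sB by (simp add: vs.subspace_diff)
      ultimately have t: "a - a0 \<in> A \<inter> B" by simp
      have "b0 - (a - a0) = b" using e ab unfolding h_def by (simp add: algebra_simps)
      then show "x \<in> (\<lambda>t. (a0 + t, b0 - t)) ` (A \<inter> B)"
        unfolding xab by (intro image_eqI[OF _ t]) simp
    next
      fix x assume "x \<in> (\<lambda>t. (a0 + t, b0 - t)) ` (A \<inter> B)"
      then obtain t where t: "t \<in> A" "t \<in> B" and x: "x = (a0 + t, b0 - t)" by auto
      have "a0 + t \<in> A" "b0 - t \<in> B" using t ab sA sB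
        by (auto simp: vs.subspace_add vs.subspace_diff)
      moreover have "h (a0 + t, b0 - t) = y" using ab unfolding h_def by simp
      ultimately show "x \<in> {x\<in>A \<times> B. h x = y}" using x by simp
    qed
    moreover have "inj_on (\<lambda>t. (a0 + t, b0 - t)) (A \<inter> B)" by (rule inj_onI) auto
    ultimately show ?thesis by (simp add: card_image)
  qed
  have "card (A \<times> B) = card (h ` (A \<times> B)) * card (A \<inter> B)"
    using fA fB fib by (intro card_fibers) auto
  then show ?thesis using img by (simp add: card_cartesian_product)
qed

lemma subspace_sumset:
  "vs.subspace A \<Longrightarrow> vs.subspace B \<Longrightarrow> vs.subspace (sumset A B :: (nat \<Rightarrow> 'a::field) set)"
  unfolding sumset_def by (rule vs.subspace_sums)

lemma sumset_Lnq: "A \<subseteq> Lnq n \<Longrightarrow> B \<subseteq> Lnq n \<Longrightarrow> sumset A B \<subseteq> Lnq n"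
  unfolding sumset_def Lnq_def by (fastforce simp: subset_iff)

lemma finite_sub_Lnq: "S \<subseteq> Lnq n \<Longrightarrow> finite (S :: (nat \<Rightarrow> 'a::{zero,finite}) set)"
  using finite_Lnq finite_subset by blast

lemma dim_sumset:
  fixes A B :: "(nat \<Rightarrow> 'a::{field,finite}) set"
  assumes sA: "vs.subspace A" and sB: "vs.subspace B" and LA: "A \<subseteq> Lnq n" and LB: "B \<subseteq> Lnq n"
  shows "vs.dim (sumset A B) + vs.dim (A \<inter> B) = vs.dim A + vs.dim B"
proof -
  have fA: "finite A" and fB: "finite B" using LA LB by (auto intro: finite_sub_Lnq)
  have "card (sumset A B) * card (A \<inter> B) = card A * card B"
    by (rule card_sumset[OF sA sB fA fB])
  moreover have "card (sumset A B) = CARD('a) ^ vs.dim (sumset A B)"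
    using subspace_sumset[OF sA sB] sumset_Lnq[OF LA LB]
    by (intro card_subspace) (auto intro: finite_sub_Lnq)
  moreover have "card (A \<inter> B) = CARD('a) ^ vs.dim (A \<inter> B)"
    using sA sB fA by (intro card_subspace) (auto intro: vs.subspace_inter)
  moreover have "card A = CARD('a) ^ vs.dim A" using sA fA by (rule card_subspace)
  moreover have "card B = CARD('a) ^ vs.dim B" using sB fB by (rule card_subspace)
  ultimately have "CARD('a) ^ (vs.dim (sumset A B) + vs.dim (A \<inter> B)) = CARD('a) ^ (vs.dim A + vs.dim B)"
    by (simp add: power_add)
  then show ?thesis by (rule pow_inj)
qed

lemma dotp_add: "dotp n f (g + h) = dotp n f g + dotp n f h"
  unfolding dotp_def by (simp add: algebra_simps sum.distrib)

lemma dotp_scal: "dotp n f (scal c g) = c * dotp n f g"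
  unfolding dotp_def scal_def by (simp add: sum_distrib_left algebra_simps)

lemma dotp_diff_left: "dotp n (f - f') g = dotp n f g - dotp n f' g"
  unfolding dotp_def by (simp add: algebra_simps sum_subtractf)

lemma dotp_add_left: "dotp n (f + f') g = dotp n f g + dotp n f' g"
  unfolding dotp_def by (simp add: algebra_simps sum.distrib)

lemma subspace_dotp0: "vs.subspace {g. dotp n f g = (0::'a::field)}"
  unfolding vs.subspace_def by (auto simp: dotp_add dotp_scal) (simp add: dotp_def)

lemma dotp_span:
  assumes "\<forall>b\<in>B. dotp n f b = (0::'a::field)" and "g \<in> vs.span B"
  shows "dotp n f g = 0"
proof -
  have "vs.span B \<subseteq> {g. dotp n f g = 0}"
    using assms(1) by (intro vs.span_minimal subspace_dotp0) auto
  then show ?thesis using assms(2) by auto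
qed

lemma subspace_sdual: "vs.subspace (sdual n S :: (nat \<Rightarrow> 'a::field) set)"
proof -
  have "dotp n (scal c f) g = c * dotp n f g" for c and f g :: "nat \<Rightarrow> 'a"
    unfolding dotp_def scal_def by (simp add: sum_distrib_left algebra_simps)
  moreover have "dotp n 0 g = 0" for g :: "nat \<Rightarrow> 'a" by (simp add: dotp_def)
  ultimately show ?thesis
    unfolding vs.subspace_def sdual_def
    using subspace_Lnq[of n, unfolded vs.subspace_def]
    by (auto simp: dotp_add_left)
qed

lemma sdual_Lnq: "sdual n S \<subseteq> Lnq n"
  unfolding sdual_def by auto




lemma sdual_lower:
  fixes S :: "(nat \<Rightarrow> 'a::{field,finite}) set"
  assumes sub: "vs.subspace S" and L: "S \<subseteq> Lnq n"
  shows "CARD('a) ^ n \<le> card (sdual n S) * card S"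
proof -
  obtain B where B: "B \<subseteq> S" "vs.independent B" "S \<subseteq> vs.span B" "card B = vs.dim S"
    by (rule vs.basis_exists)
  have spanB: "vs.span B = S" using B sub by (intro vs.span_subspace) auto
  have finB: "finite B" using B L finite_sub_Lnq finite_subset by blast
  have cardS: "card S = CARD('a) ^ card B"
    using card_span_indep[OF finB B(2)] spanB by simp
  define h where "h = (\<lambda>f. restrict (\<lambda>b. dotp n f b) B)"
  have fib: "card {f\<in>Lnq n. h f = y} = card (sdual n S)" if yin: "y \<in> h ` Lnq n" for y
  proof -
    obtain f0 where f0: "f0 \<in> Lnq n" "y = h f0" using yin by blast
    have "{f\<in>Lnq n. h f = y} = (\<lambda>d. f0 + d) ` sdual n S"
    proof (intro Set.set_eqI iffI)
      fix f assume "f \<in> {f\<in>Lnq n. h f = y}"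
      then have f: "f \<in> Lnq n" "h f = h f0" using f0 by auto
      have "\<forall>b\<in>B. dotp n (f - f0) b = 0"
      proof
        fix b assume "b \<in> B"
        then have "dotp n f b = dotp n f0 b" using f(2) unfolding h_def by (metis restrict_apply')
        then show "dotp n (f - f0) b = 0" by (simp add: dotp_diff_left)
      qed
      then have "\<forall>g\<in>S. dotp n (f - f0) g = 0" using dotp_span spanB by blast
      moreover have "f - f0 \<in> Lnq n" using f f0 subspace_Lnq vs.subspace_diff by blast
      ultimately have "f - f0 \<in> sdual n S" unfolding sdual_def by simp
      then show "f \<in> (\<lambda>d. f0 + d) ` sdual n S" by (intro image_eqI[where x="f - f0"]) auto
    next
      fix f assume "f \<in> (\<lambda>d. f0 + d) ` sdual n S"
      then obtain d where d: "d \<in> sdual n S" and fd: "f = f0 + d" by auto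
      have "f \<in> Lnq n" using d f0 fd subspace_Lnq vs.subspace_add sdual_Lnq by blast
      moreover have "h f = h f0"
        unfolding h_def fd using d B(1) by (auto simp: dotp_add_left sdual_def fun_eq_iff)
      ultimately show "f \<in> {f\<in>Lnq n. h f = y}" using f0 by simp
    qed
    moreover have "inj_on (\<lambda>d. f0 + d) (sdual n S)" by (rule inj_onI) auto
    ultimately show ?thesis by (simp add: card_image)
  qed
  have "card (Lnq n :: (nat \<Rightarrow> 'a) set) = card (h ` Lnq n) * card (sdual n S)"
    using finite_Lnq fib by (intro card_fibers) auto
  moreover have "card (h ` Lnq n) \<le> card (B \<rightarrow>\<^sub>E (UNIV :: 'a set))"
    using finB by (intro card_mono) (auto simp: h_def finite_PiE)
  moreover have "card (B \<rightarrow>\<^sub>E (UNIV :: 'a set)) = card S"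
    using finB cardS by (simp add: card_PiE)
  ultimately show ?thesis by (simp add: card_Lnq mult.commute)
qed




lemma sum_fun_apply: "(\<Sum>i\<in>A. (f i :: 'b \<Rightarrow> 'c::comm_monoid_add)) x = (\<Sum>i\<in>A. f i x)"
  by (induct A rule: infinite_finite_induct) auto

definition evec :: "nat \<Rightarrow> nat \<Rightarrow> 'a::zero_neq_one" where
  "evec i = (\<lambda>j. if j = i then 1 else 0)"

lemma Lnq_sum_evec:
  assumes "f \<in> Lnq n"
  shows "f = (\<Sum>i<n. scal (f i) (evec i :: nat \<Rightarrow> 'a::field))"
proof
  fix j
  have "(\<Sum>i<n. scal (f i) (evec i :: nat \<Rightarrow> 'a)) j = (\<Sum>i<n. f i * evec i j)"
    by (simp add: scal_def sum_fun_apply)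
  also have "\<dots> = (if j < n then f j else 0)"
    by (simp add: evec_def if_distrib[of "\<lambda>x. _ * x"] sum.If_cases)
  also have "\<dots> = f j" using assms by (auto simp: Lnq_def)
  finally show "f j = (\<Sum>i<n. scal (f i) (evec i :: nat \<Rightarrow> 'a)) j" by simp
qed


lemma sdual_upper:
  fixes S :: "(nat \<Rightarrow> 'a::{field,finite}) set"
  assumes sub: "vs.subspace S" and L: "S \<subseteq> Lnq n"
  shows "card (sdual n S) * card S \<le> CARD('a) ^ n"
proof -
  define P where "P = {J. J \<subseteq> {..<n} \<and> S \<inter> Vset J = {0::nat\<Rightarrow>'a}}"
  have finP: "finite P" unfolding P_def by (rule finite_subset[of _ "Pow {..<n}"]) auto
  have "0 \<in> S" using sub vs.subspace_0 by blast
  then have "{} \<in> P" unfolding P_def Vset_def by auto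
  then obtain J where JP: "J \<in> P" and Jmax: "\<And>J'. J' \<in> P \<Longrightarrow> J \<subseteq> J' \<Longrightarrow> J' = J"
    using finite_has_maximal[OF finP] by blast
  have Jn: "J \<subseteq> {..<n}" and SJ: "S \<inter> Vset J = {0}" using JP unfolding P_def by auto
  have finJ: "finite J" using Jn finite_subset by blast
  have VJL: "Vset J \<subseteq> Lnq n" using Jn unfolding Vset_def Lnq_def by auto
  have subSV: "vs.subspace (sumset S (Vset J))" by (rule subspace_sumset[OF sub subspace_Vset])
  have ev: "evec i \<in> sumset S (Vset J)" if "i < n" for i
  proof (cases "i \<in> J")
    case True
    then have "evec i \<in> Vset J" unfolding Vset_def evec_def by auto
    then show ?thesis using \<open>0 \<in> S\<close> unfolding sumset_def by force
  next
    case False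
    have "insert i J \<notin> P" using Jmax[of "insert i J"] False by auto
    moreover have "insert i J \<subseteq> {..<n}" using Jn that by auto
    ultimately have "S \<inter> Vset (insert i J) \<noteq> {0}" unfolding P_def by auto
    moreover have "0 \<in> S \<inter> Vset (insert i J)" using \<open>0 \<in> S\<close> unfolding Vset_def by auto
    ultimately obtain s where s: "s \<in> S" "s \<in> Vset (insert i J)" "s \<noteq> 0" by blast
    have si: "s i \<noteq> 0"
    proof
      assume "s i = 0"
      then have "s \<in> Vset J" using s(2) unfolding Vset_def by auto
      then show False using s SJ by auto
    qed
    define v where "v = s - scal (s i) (evec i)"
    have v: "v \<in> Vset J" using s(2) unfolding v_def Vset_def scal_def evec_def by auto
    have "evec i = scal (1 / s i) s + scal (- (1 / s i)) v"
      unfolding v_def using si by (auto simp: scal_def fun_eq_iff evec_def field_simps)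
    moreover have "scal (1 / s i) s \<in> S" using s(1) sub vs.subspace_scale by blast
    moreover have "scal (- (1 / s i)) v \<in> Vset J" using v subspace_Vset vs.subspace_scale by blast
    ultimately show ?thesis unfolding sumset_def by blast
  qed
  have SVeq: "sumset S (Vset J) = Lnq n"
  proof
    show "sumset S (Vset J) \<subseteq> Lnq n" using sumset_Lnq[OF L VJL] .
    show "Lnq n \<subseteq> sumset S (Vset J)"
    proof
      fix f :: "nat \<Rightarrow> 'a" assume f: "f \<in> Lnq n"
      have "(\<Sum>i<n. scal (f i) (evec i :: nat \<Rightarrow> 'a)) \<in> sumset S (Vset J)"
        using ev subSV by (intro vs.subspace_sum) (auto intro: vs.subspace_scale)
      then show "f \<in> sumset S (Vset J)" using Lnq_sum_evec[OF f] by simp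
    qed
  qed
  have finS: "finite S" using L by (rule finite_sub_Lnq)
  have "card (sumset S (Vset J)) * card (S \<inter> Vset J) = card S * card (Vset J :: (nat \<Rightarrow> 'a) set)"
    using sub subspace_Vset finS finite_Vset[OF finJ] by (intro card_sumset) auto
  then have cardeq: "CARD('a) ^ n = card S * CARD('a) ^ card J"
    using SVeq SJ by (simp add: card_Lnq card_Vset[OF finJ])
  have cJn: "card J \<le> n" using Jn card_mono[of "{..<n}" J] by simp
  have cardS: "card S = CARD('a) ^ (n - card J)"
  proof -
    have "CARD('a) ^ n = CARD('a) ^ (n - card J) * CARD('a) ^ card J"
      using cJn by (simp add: power_add[symmetric])
    then show ?thesis using cardeq by simp
  qed
  define K where "K = {..<n} - J"
  have finK: "finite K" and cK: "card K = n - card J" unfolding K_def using Jn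
    by (auto simp: card_Diff_subset finJ)
  define pr where "pr = (\<lambda>s::nat\<Rightarrow>'a. restrict s K)"
  have injpr: "inj_on pr S"
  proof (rule inj_onI)
    fix s s' assume s: "s \<in> S" and s': "s' \<in> S" and e: "pr s = pr s'"
    have "s - s' \<in> S" using s s' sub vs.subspace_diff by blast
    moreover have "s - s' \<in> Vset J"
      unfolding Vset_def
    proof (intro CollectI allI impI)
      fix i assume "i \<notin> J"
      show "(s - s') i = 0"
      proof (cases "i < n")
        case True
        then have "i \<in> K" using \<open>i \<notin> J\<close> unfolding K_def by auto
        then show ?thesis using e unfolding pr_def by (metis diff_self restrict_apply' fun_diff_def)
      next
        case False
        have "s i = 0" "s' i = 0" using s s' L False unfolding Lnq_def by (auto simp: subset_iff)
        then show ?thesis by simp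
      qed
    qed
    ultimately have "s - s' = 0" using SJ by blast
    then show "s = s'" by simp
  qed
  have prS: "pr ` S = K \<rightarrow>\<^sub>E (UNIV :: 'a set)"
  proof (rule card_subset_eq)
    show "finite (K \<rightarrow>\<^sub>E (UNIV :: 'a set))" using finK by (simp add: finite_PiE)
    show "pr ` S \<subseteq> K \<rightarrow>\<^sub>E UNIV" unfolding pr_def by auto
    show "card (pr ` S) = card (K \<rightarrow>\<^sub>E (UNIV :: 'a set))"
      using injpr cardS finK cK by (simp add: card_image card_PiE)
  qed
  define rh where "rh = (\<lambda>f::nat\<Rightarrow>'a. restrict f J)"
  have injrh: "inj_on rh (sdual n S)"
  proof (rule inj_onI)
    fix f f' assume f: "f \<in> sdual n S" and f': "f' \<in> sdual n S" and e: "rh f = rh f'"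
    define d where "d = f - f'"
    have dS: "\<forall>g\<in>S. dotp n d g = 0" using f f' unfolding d_def sdual_def by (simp add: dotp_diff_left)
    have dJ: "d i = 0" if "i \<in> J" for i
      using e that unfolding rh_def d_def by (metis diff_self restrict_apply' fun_diff_def)
    have dn: "d i = 0" if "\<not> i < n" for i
      using f f' that unfolding d_def sdual_def Lnq_def by auto
    have dK: "d i = 0" if iK: "i \<in> K" for i
    proof -
      have "restrict (evec i) K \<in> pr ` S" using prS by auto
      then obtain s where s: "s \<in> S" "restrict s K = restrict (evec i) K" unfolding pr_def by auto
      have sK: "s j = evec i j" if "j \<in> K" for j using s(2) that by (metis restrict_apply')
      have "dotp n d s = (\<Sum>j<n. if j = i then d i else 0)"
        unfolding dotp_def
      proof (rule sum.cong[OF refl])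
        fix j assume "j \<in> {..<n}"
        then have "j \<in> J \<or> j \<in> K" unfolding K_def by auto
        then show "d j * s j = (if j = i then d i else 0)"
          using dJ sK iK unfolding evec_def K_def by auto
      qed
      also have "\<dots> = d i" using iK unfolding K_def by simp
      finally show ?thesis using dS s(1) by simp
    qed
    have "d = 0"
    proof
      fix i show "d i = 0 i"
        using dJ dK dn unfolding K_def by (cases "i < n") auto
    qed
    then show "f = f'" unfolding d_def by simp
  qed
  have "card (sdual n S) \<le> card (J \<rightarrow>\<^sub>E (UNIV :: 'a set))"
    using injrh finJ by (intro card_inj_on_le) (auto simp: rh_def finite_PiE)
  then have "card (sdual n S) \<le> CARD('a) ^ card J" using finJ by (simp add: card_PiE)
  then have "card (sdual n S) * card S \<le> CARD('a) ^ card J * card S" by simp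
  then show ?thesis using cardeq by (simp add: mult.commute)
qed

lemma dim_sdual:
  fixes S :: "(nat \<Rightarrow> 'a::{field,finite}) set"
  assumes sub: "vs.subspace S" and L: "S \<subseteq> Lnq n"
  shows "vs.dim (sdual n S) + vs.dim S = n"
proof -
  have "card (sdual n S) * card S = CARD('a) ^ n"
    using sdual_lower[OF sub L] sdual_upper[OF sub L] by simp
  moreover have "card (sdual n S) = CARD('a) ^ vs.dim (sdual n S)"
    using subspace_sdual[of n S] finite_sub_Lnq[OF sdual_Lnq] by (intro card_subspace)
  moreover have "card S = CARD('a) ^ vs.dim S"
    using sub L by (intro card_subspace) (auto intro: finite_sub_Lnq)
  ultimately have "CARD('a) ^ (vs.dim (sdual n S) + vs.dim S) = CARD('a) ^ n"
    by (simp add: power_add)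
  then show ?thesis by (rule pow_inj)
qed




context
  fixes p m q n :: nat
  assumes pp: "prime p" and m0: "0 < m" and qpm: "q = p ^ m" and n2: "2 \<le> n"
    and cardq: "CARD('a::{field,finite}) = q ^ n"
begin

lemma char_eq: "CHAR('a) = p"
proof -
  have pos: "CHAR('a) > 0" by (rule finite_imp_CHAR_pos) simp
  have pr: "prime CHAR('a)" by (rule prime_CHAR_semidom[OF pos])
  have "CHAR('a) dvd CARD('a)" by (rule CHAR_dvd_CARD)
  then have "CHAR('a) dvd p ^ (m * n)" using cardq qpm by (simp add: power_mult)
  then have "CHAR('a) dvd p" by (rule prime_dvd_power[OF pr])
  then show ?thesis by (rule primes_dvd_imp_eq[OF pr pp])
qed

lemma q_ge2: "2 \<le> q"
proof -
  have "2 \<le> p" using pp by (simp add: prime_ge_2_nat)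
  also have "p \<le> p ^ m" using m0 prime_gt_0_nat[OF pp] by (intro self_le_power) auto
  finally show ?thesis using qpm by simp
qed

lemma q_pos: "0 < q" using q_ge2 by simp

lemma frob_add: "((x::'a) + y) ^ (q ^ i) = x ^ (q ^ i) + y ^ (q ^ i)"
proof -
  have "q ^ i = CHAR('a) ^ (m * i)" using char_eq qpm by (simp add: power_mult)
  moreover have "prime CHAR('a)" using char_eq pp by simp
  ultimately show ?thesis by (intro freshmans_dream') auto
qed

lemma frob_sum: "(\<Sum>a\<in>A. (f a :: 'a)) ^ (q ^ i) = (\<Sum>a\<in>A. f a ^ (q ^ i))"
  by (induct A rule: infinite_finite_induct) (auto simp: frob_add q_pos)

lemma frob_inj: "(x::'a) ^ (q ^ i) = y ^ (q ^ i) \<Longrightarrow> x = y"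
proof -
  assume e: "x ^ (q ^ i) = y ^ (q ^ i)"
  have "x ^ (q ^ i) = (x - y) ^ (q ^ i) + y ^ (q ^ i)"
    using frob_add[of "x - y" y i] by simp
  then have "(x - y) ^ (q ^ i) = 0" using e by simp
  then show "x = y" by simp
qed

lemma frob_surj: "\<exists>z::'a. z ^ (q ^ i) = c"
proof -
  have "inj (\<lambda>x::'a. x ^ (q ^ i))" by (rule injI) (rule frob_inj)
  then have "surj (\<lambda>x::'a. x ^ (q ^ i))" by (rule finite_UNIV_inj_surj[OF finite_class.finite_UNIV])
  then show ?thesis by (metis surjD)
qed

lemma trace_nondeg:
  assumes x: "(x::'a) \<noteq> 0"
  shows "\<exists>l. trace q n (l * x) \<noteq> 0"
proof -
  define P where "P = (\<Sum>i<n. monom (x ^ (q ^ i)) (q ^ i))"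
  have q1: "1 < q" using q_ge2 by simp
  have polyP: "poly P l = trace q n (l * x)" for l
    unfolding P_def trace_def by (simp add: poly_sum poly_monom power_mult_distrib mult.commute)
  have coeffP: "coeff P k = (\<Sum>i<n. if q ^ i = k then x ^ (q ^ i) else 0)" for k
    unfolding P_def by (simp add: coeff_sum)
  have "coeff P (q ^ (n - 1)) = x ^ (q ^ (n - 1))"
  proof -
    have "(\<Sum>i<n. if q ^ i = q ^ (n - 1) then x ^ (q ^ i) else (0::'a)) =
          (\<Sum>i<n. if i = n - 1 then x ^ (q ^ (n - 1)) else 0)"
      using q1 by (intro sum.cong) (auto simp: power_inject_exp)
    also have "\<dots> = x ^ (q ^ (n - 1))" using n2 by simp
    finally show ?thesis by (simp add: coeffP)
  qed
  then have P0: "P \<noteq> 0" using x by auto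
  have "degree P \<le> q ^ (n - 1)"
  proof (rule degree_le, intro allI impI)
    fix k assume k: "q ^ (n - 1) < k"
    have "q ^ i \<noteq> k" if "i < n" for i
    proof -
      have "q ^ i \<le> q ^ (n - 1)" using that q1 by (intro power_increasing) auto
      then show ?thesis using k by simp
    qed
    then show "coeff P k = 0" by (simp add: coeffP)
  qed
  then have "card {l. poly P l = 0} \<le> q ^ (n - 1)"
    using card_poly_roots_bound[OF P0] by linarith
  also have "\<dots> < q ^ n" using q1 n2 by (intro power_strict_increasing) auto
  also have "\<dots> = card (UNIV :: 'a set)" using cardq by simp
  finally have "{l. poly P l = 0} \<noteq> UNIV" by auto
  then obtain l where "poly P l \<noteq> 0" by auto
  then show ?thesis using polyP by auto
qed

lemma trace_0: "trace q n (0::'a) = 0"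
  unfolding trace_def using q_ge2 by (simp add: power_0_left)

lemma ddual_eq_sdual:
  assumes sub: "vs.subspace (S :: (nat \<Rightarrow> 'a) set)"
  shows "ddual q n S = sdual n S"
proof -
  have bf: "bform q n f g = trace q n (dotp n f g)" for f g :: "nat \<Rightarrow> 'a"
    unfolding bform_def dotp_def ..
  have "(\<forall>g\<in>S. bform q n f g = 0) \<longleftrightarrow> (\<forall>g\<in>S. dotp n f g = 0)" for f
  proof
    assume h: "\<forall>g\<in>S. bform q n f g = 0"
    show "\<forall>g\<in>S. dotp n f g = 0"
    proof (rule ccontr)
      assume "\<not> (\<forall>g\<in>S. dotp n f g = 0)"
      then obtain g where g: "g \<in> S" "dotp n f g \<noteq> 0" by blast
      then obtain l where l: "trace q n (l * dotp n f g) \<noteq> 0" using trace_nondeg by blast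
      have "scal l g \<in> S" using g sub vs.subspace_scale by blast
      then have "trace q n (dotp n f (scal l g)) = 0" using h bf by simp
      then show False using l by (simp add: dotp_scal)
    qed
  next
    assume "\<forall>g\<in>S. dotp n f g = 0"
    then show "\<forall>g\<in>S. bform q n f g = 0" by (simp add: bf trace_0)
  qed
  then show ?thesis unfolding ddual_def sdual_def by blast
qed

end




lemma mod_shift_inv:
  fixes n m j :: nat
  assumes "0 < n" "m < n"
  shows "((m + (n - j mod n)) mod n + j mod n) mod n = m"
    and "((m + j mod n) mod n + (n - j mod n)) mod n = m"
proof -
  have jn: "j mod n < n" by (rule mod_less_divisor[OF assms(1)])
  have "((m + (n - j mod n)) mod n + j mod n) mod n = (m + (n - j mod n) + j mod n) mod n"
    by (simp add: mod_add_left_eq)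
  also have "m + (n - j mod n) + j mod n = m + n" using jn by simp
  finally show "((m + (n - j mod n)) mod n + j mod n) mod n = m" using assms by simp
  have "((m + j mod n) mod n + (n - j mod n)) mod n = (m + j mod n + (n - j mod n)) mod n"
    by (simp add: mod_add_left_eq)
  also have "m + j mod n + (n - j mod n) = m + n" using jn by simp
  finally show "((m + j mod n) mod n + (n - j mod n)) mod n = m" using assms by simp
qed

lemma bij_shift:
  fixes n j :: nat
  assumes "0 < n"
  shows "bij_betw (\<lambda>m. (m + (n - j mod n)) mod n) {..<n} {..<n}"
  by (rule bij_betw_byWitness[where f'="\<lambda>m. (m + j mod n) mod n"])
     (use assms mod_shift_inv in \<open>auto intro: mod_less_divisor\<close>)

context
  fixes p m q n :: nat
  assumes pp: "prime p" and m0: "0 < m" and qpm: "q = p ^ m" and n2: "2 \<le> n"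
    and cardq: "CARD('a::{field,finite}) = q ^ n"
begin

lemma n0: "0 < n" using n2 by simp

lemma fshift_Lnq: "fshift q n j (f :: nat \<Rightarrow> 'a) \<in> Lnq n"
  unfolding fshift_def Lnq_def by auto

lemma fshift_add: "fshift q n j (f + g :: nat \<Rightarrow> 'a) = fshift q n j f + fshift q n j g"
  unfolding fshift_def using frob_add[OF pp m0 qpm n2 cardq] by (auto simp: fun_eq_iff)

lemma fshift_scal: "fshift q n j (scal c (f :: nat \<Rightarrow> 'a)) = scal (c ^ (q ^ j)) (fshift q n j f)"
  unfolding fshift_def scal_def by (auto simp: fun_eq_iff power_mult_distrib)

lemma fshift_0: "fshift q n j (0 :: nat \<Rightarrow> 'a) = 0"
  unfolding fshift_def using q_pos[OF pp m0 qpm n2 cardq] by (auto simp: fun_eq_iff power_0_left)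

lemma dotp_fshift:
  "dotp n (fshift q n j f) (fshift q n j (g :: nat \<Rightarrow> 'a)) = (dotp n f g) ^ (q ^ j)"
proof -
  define s where "s = (\<lambda>m. (m + (n - j mod n)) mod n)"
  have "dotp n (fshift q n j f) (fshift q n j g) = (\<Sum>m<n. (f (s m) * g (s m)) ^ (q ^ j))"
    unfolding dotp_def fshift_def s_def by (simp add: power_mult_distrib)
  also have "\<dots> = (\<Sum>m<n. (f m * g m) ^ (q ^ j))"
    using sum.reindex_bij_betw[OF bij_shift[OF n0, of j], of "\<lambda>m. (f m * g m) ^ (q ^ j)"]
    unfolding s_def by simp
  also have "\<dots> = (dotp n f g) ^ (q ^ j)"
    unfolding dotp_def by (rule frob_sum[OF pp m0 qpm n2 cardq, symmetric])
  finally show ?thesis .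
qed

lemma fshift_at_inv:
  assumes "k < n"
  shows "fshift q n j (f :: nat \<Rightarrow> 'a) ((k + j mod n) mod n) = (f k) ^ (q ^ j)"
  unfolding fshift_def using mod_shift_inv(2)[OF n0 assms, of j] n0 by simp

lemma fshift_inj: "inj_on (fshift q n j :: (nat \<Rightarrow> 'a) \<Rightarrow> _) (Lnq n)"
proof (rule inj_onI)
  fix f g :: "nat \<Rightarrow> 'a" assume f: "f \<in> Lnq n" and g: "g \<in> Lnq n" and e: "fshift q n j f = fshift q n j g"
  show "f = g"
  proof
    fix k show "f k = g k"
    proof (cases "k < n")
      case True
      have "f k ^ (q ^ j) = g k ^ (q ^ j)"
        using fshift_at_inv[OF True, of j f] fshift_at_inv[OF True, of j g] e by simp
      then show ?thesis by (rule frob_inj[OF pp m0 qpm n2 cardq])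
    next
      case False
      then show ?thesis using f g unfolding Lnq_def by auto
    qed
  qed
qed

lemma fshift_surj:
  assumes h: "(h :: nat \<Rightarrow> 'a) \<in> Lnq n"
  shows "\<exists>f\<in>Lnq n. fshift q n j f = h"
proof -
  define r where "r = (\<lambda>c::'a. SOME z. z ^ (q ^ j) = c)"
  have r: "r c ^ (q ^ j) = c" for c
    unfolding r_def by (rule someI_ex[OF frob_surj[OF pp m0 qpm n2 cardq]])
  define f where "f = (\<lambda>k. if k < n then r (h ((k + j mod n) mod n)) else 0)"
  have "f \<in> Lnq n" unfolding f_def Lnq_def by auto
  moreover have "fshift q n j f = h"
  proof
    fix k show "fshift q n j f k = h k"
    proof (cases "k < n")
      case True
      have lt: "(k + (n - j mod n)) mod n < n" using n0 by simp
      have "fshift q n j f k = f ((k + (n - j mod n)) mod n) ^ (q ^ j)"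
        using True unfolding fshift_def by simp
      also have "f ((k + (n - j mod n)) mod n) = r (h k)"
        using lt unfolding f_def by (simp only: if_True mod_shift_inv(1)[OF n0 True])
      finally show ?thesis by (simp add: r)
    next
      case False
      then show ?thesis using h unfolding fshift_def Lnq_def by auto
    qed
  qed
  ultimately show ?thesis by blast
qed

lemma subspace_cshift:
  assumes sub: "vs.subspace (C :: (nat \<Rightarrow> 'a) set)"
  shows "vs.subspace (cshift q n j C)"
  unfolding vs.subspace_def cshift_def
proof (intro conjI ballI allI)
  show "0 \<in> fshift q n j ` C"
    using fshift_0 sub vs.subspace_0 by (metis image_eqI)
next
  fix x y assume "x \<in> fshift q n j ` C" "y \<in> fshift q n j ` C"
  then obtain a b where "a \<in> C" "b \<in> C" "x = fshift q n j a" "y = fshift q n j b" by auto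
  then show "x + y \<in> fshift q n j ` C"
    using sub vs.subspace_add fshift_add by (metis image_eqI)
next
  fix c :: 'a and x assume "x \<in> fshift q n j ` C"
  then obtain a where a: "a \<in> C" "x = fshift q n j a" by auto
  obtain z where z: "z ^ (q ^ j) = c" using frob_surj[OF pp m0 qpm n2 cardq] by blast
  have "scal c x = fshift q n j (scal z a)" using a z by (simp add: fshift_scal)
  moreover have "scal z a \<in> C" using a sub vs.subspace_scale by blast
  ultimately show "scal c x \<in> fshift q n j ` C" by blast
qed

lemma card_cshift:
  assumes "C \<subseteq> Lnq n"
  shows "card (cshift q n j (C :: (nat \<Rightarrow> 'a) set)) = card C"
  unfolding cshift_def using fshift_inj assms by (intro card_image) (rule inj_on_subset)

lemma cshift_Lnq: "cshift q n j (C :: (nat \<Rightarrow> 'a) set) \<subseteq> Lnq n"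
  unfolding cshift_def using fshift_Lnq by auto

lemma sdual_cshift:
  assumes L: "C \<subseteq> Lnq n"
  shows "sdual n (cshift q n j (C :: (nat \<Rightarrow> 'a) set)) = cshift q n j (sdual n C)"
proof (intro Set.set_eqI iffI)
  fix h assume h: "h \<in> sdual n (cshift q n j C)"
  then have hL: "h \<in> Lnq n" unfolding sdual_def by simp
  obtain f where f: "f \<in> Lnq n" "fshift q n j f = h" using fshift_surj[OF hL] by blast
  have "dotp n f g = 0" if g: "g \<in> C" for g
  proof -
    have "dotp n h (fshift q n j g) = 0" using h g unfolding sdual_def cshift_def by auto
    then have "(dotp n f g) ^ (q ^ j) = 0"
      using f dotp_fshift by metis
    then show ?thesis by simp
  qed
  then have "f \<in> sdual n C" using f unfolding sdual_def by auto
  then show "h \<in> cshift q n j (sdual n C)" using f unfolding cshift_def by blast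
next
  fix h assume "h \<in> cshift q n j (sdual n C)"
  then obtain f where f: "f \<in> sdual n C" "h = fshift q n j f" unfolding cshift_def by auto
  have "\<forall>g'\<in>cshift q n j C. dotp n h g' = 0"
    using f q_pos[OF pp m0 qpm n2 cardq] unfolding cshift_def sdual_def
    by (auto simp: dotp_fshift power_0_left)
  then show "h \<in> sdual n (cshift q n j C)" using f fshift_Lnq unfolding sdual_def by auto
qed

end




lemma sdual_Int_sumset:
  assumes "0 \<in> A" "0 \<in> B"
  shows "sdual n A \<inter> sdual n B = sdual n (sumset A B :: (nat \<Rightarrow> 'a::field) set)"
proof (intro Set.set_eqI iffI)
  fix f assume "f \<in> sdual n A \<inter> sdual n B"
  then show "f \<in> sdual n (sumset A B)" unfolding sdual_def sumset_def by (auto simp: dotp_add)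
next
  fix f assume f: "f \<in> sdual n (sumset A B)"
  have "x \<in> sumset A B" if "x \<in> A" for x
    using that assms unfolding sumset_def by (intro CollectI exI[of _ x] exI[of _ 0]) auto
  moreover have "x \<in> sumset A B" if "x \<in> B" for x
    using that assms unfolding sumset_def by (intro CollectI exI[of _ 0] exI[of _ x]) auto
  ultimately show "f \<in> sdual n A \<inter> sdual n B" using f unfolding sdual_def by auto
qed

theorem proposition4p1:
  fixes C :: "(nat \<Rightarrow> 'a::{field,finite}) set" and p m q n k :: nat
  assumes "prime p" and "0 < m" and "q = p ^ m"
    and "2 \<le> n"
    and "card (UNIV :: 'a set) = q ^ n"
    and "C \<subseteq> Lnq n"
    and "Modules.module.subspace scal C"
    and "cdim C = k"
  shows "(\<forall>i<n. ddual q n (cshift q n i C) = cshift q n i (ddual q n C))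
         \<and> int (hval q n (ddual q n C)) = int n - 2 * int k + int (hval q n C)"
proof -
  note ctx = assms(1-5)
  have sub: "vs.subspace C" using assms(7) by simp
  have L: "C \<subseteq> Lnq n" by (rule assms(6))
  have k: "vs.dim C = k" using assms(8) unfolding cdim_def by simp
  have DC: "ddual q n C = sdual n C" by (rule ddual_eq_sdual[OF ctx sub])
  have part1: "ddual q n (cshift q n i C) = cshift q n i (ddual q n C)" for i
  proof -
    have "ddual q n (cshift q n i C) = sdual n (cshift q n i C)"
      by (rule ddual_eq_sdual[OF ctx subspace_cshift[OF ctx sub]])
    also have "\<dots> = cshift q n i (sdual n C)" by (rule sdual_cshift[OF ctx L])
    finally show ?thesis using DC by simp
  qed
  define D where "D = sdual n C"
  define g where "g = (\<lambda>j. cdim (C \<inter> cshift q n j C))"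
  define g' where "g' = (\<lambda>j. cdim (D \<inter> cshift q n j D))"
  have rel: "g' j + 2 * k = n + g j" for j
  proof -
    define Cj where "Cj = cshift q n j C"
    have subj: "vs.subspace Cj" unfolding Cj_def by (rule subspace_cshift[OF ctx sub])
    have Lj: "Cj \<subseteq> Lnq n" unfolding Cj_def by (rule cshift_Lnq[OF ctx])
    have dimj: "vs.dim Cj = k"
    proof -
      have "card Cj = card C" unfolding Cj_def by (rule card_cshift[OF ctx L])
      moreover have "card Cj = CARD('a) ^ vs.dim Cj"
        using subj Lj by (intro card_subspace) (auto intro: finite_sub_Lnq)
      moreover have "card C = CARD('a) ^ vs.dim C"
        using sub L by (intro card_subspace) (auto intro: finite_sub_Lnq)
      ultimately show ?thesis using k pow_inj by metis
    qed
    have "D \<inter> cshift q n j D = sdual n C \<inter> sdual n Cj"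
      unfolding D_def Cj_def using sdual_cshift[OF ctx L] by simp
    also have "\<dots> = sdual n (sumset C Cj)"
      using sub subj by (intro sdual_Int_sumset) (auto intro: vs.subspace_0)
    finally have eq: "D \<inter> cshift q n j D = sdual n (sumset C Cj)" .
    have subS: "vs.subspace (sumset C Cj)" by (rule subspace_sumset[OF sub subj])
    have LS: "sumset C Cj \<subseteq> Lnq n" by (rule sumset_Lnq[OF L Lj])
    have "vs.dim (sdual n (sumset C Cj)) + vs.dim (sumset C Cj) = n"
      by (rule dim_sdual[OF subS LS])
    moreover have "vs.dim (sumset C Cj) + vs.dim (C \<inter> Cj) = vs.dim C + vs.dim Cj"
      by (rule dim_sumset[OF sub subj L Lj])
    ultimately show ?thesis unfolding g'_def g_def cdim_def eq Cj_def[symmetric]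
      using k dimj by linarith
  qed
  define R where "R = {j. 1 \<le> j \<and> j \<le> n - 1 \<and> coprime j n}"
  have finR: "finite R" unfolding R_def by (rule finite_subset[of _ "{..n}"]) auto
  have "1 \<in> R" unfolding R_def using assms(4) by auto
  then have neR: "R \<noteq> {}" by blast
  have "{cdim (C \<inter> cshift q n j C) | j. 1 \<le> j \<and> j \<le> n - 1 \<and> coprime j n} = g ` R"
    unfolding g_def R_def by blast
  then have hC: "hval q n C = Max (g ` R)" unfolding hval_def by simp
  have "{cdim (D \<inter> cshift q n j D) | j. 1 \<le> j \<and> j \<le> n - 1 \<and> coprime j n} = g' ` R"
    unfolding g'_def R_def by blast
  then have hD: "hval q n D = Max (g' ` R)" unfolding hval_def by simp
  have "Max (g ` R) \<in> g ` R" using finR neR by (intro Max_in) auto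
  then obtain j0 where j0: "j0 \<in> R" "Max (g ` R) = g j0" by auto
  have "Max (g' ` R) \<in> g' ` R" using finR neR by (intro Max_in) auto
  then obtain j1 where j1: "j1 \<in> R" "Max (g' ` R) = g' j1" by auto
  have "g' j0 \<le> Max (g' ` R)" using j0 finR by simp
  moreover have "g j1 \<le> Max (g ` R)" using j1 finR by simp
  ultimately have "int (Max (g' ` R)) = int n - 2 * int k + int (Max (g ` R))"
    using rel[of j0] rel[of j1] j0 j1 by linarith
  then show ?thesis using part1 hC hD DC D_def by simp
qed


end
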